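(* Let $\mathcal F$ be a family of nonempty subsets of $[r]$ with $[r]\in\mathcal F$. Then $\Delta_{\mathcal F}$ has dimension $r-1$, and its facets are in bijection with $\widehat{\mathcal F}\setminus\{[r]\}$: for each $G\in\widehat{\mathcal F}$ with $G\ne[r]$, the set of points of $\Delta_{\mathcal F}$ where $\sum_{i\in G}x_i=|\{F\in\mathcal F:F\subseteq G\}|$ is a facet, distinct $G$ give distinct facets, and every facet arises this way. In particular the inequality description of Proposition 3.12 restricted to $G\in\widehat{\mathcal F}$ is irredundant.
   Context: For $F\subseteq[r]$ nonempty, $\Delta_F=\operatorname{conv}\{e_i:i\in F\}\subseteq\mathbb R^r$, and $\Delta_{\mathcal F}=\sum_{F\in\mathcal F}\Delta_F$ (Minkowski sum). Proposition 3.12 states that $\Delta_{\mathcal F}=\{x\in\mathbb R^r_{\ge0}:\sum_i x_i=|\mathcal F|,\ \sum_{i\in G}x_i\ge|\{F\in\mathcal F:F\subseteq G\}|\ \forall G\in\widehat{\mathcal F}\}$. The building closure $\widehat{\mathcal F}$ is the smallest family of subsets of $[r]$ containing $\mathcal F$ and all singletons such that $F\cup F'\in\widehat{\mathcal F}$ whenever $F,F'\in\widehat{\mathcal F}$ and $F\cap F'\ne\emptyset$. *)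

theory Defs
  imports "HOL-Analysis.Analysis"
begin

text \<open>Convention: the ground set [r] is the finite type 'n (so r = CARD('n)),
  and R^r is real^'n. The standard basis vector e_i is axis i 1.\<close>

definition simplexF :: "'n::finite set \<Rightarrow> (real ^ 'n) set" where
  "simplexF F = convex hull {axis i 1 | i. i \<in> F}"

definition minkowski_simplex :: "'n::finite set set \<Rightarrow> (real ^ 'n) set" where
  "minkowski_simplex \<F> =
     {x. \<exists>p. (\<forall>F\<in>\<F>. p F \<in> simplexF F) \<and> x = (\<Sum>F\<in>\<F>. p F)}"

inductive_set building_closure :: "'a set set \<Rightarrow> 'a set set" for \<F> where
  base: "F \<in> \<F> \<Longrightarrow> F \<in> building_closure \<F>"
| single: "{i} \<in> building_closure \<F>"
| union: "\<lbrakk>F \<in> building_closure \<F>; F' \<in> building_closure \<F>; F \<inter> F' \<noteq> {}\<rbrakk>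
           \<Longrightarrow> F \<union> F' \<in> building_closure \<F>"

definition count_below :: "'a set set \<Rightarrow> 'a set \<Rightarrow> nat" where
  "count_below \<F> G = card {F\<in>\<F>. F \<subseteq> G}"

definition face_for :: "'n::finite set set \<Rightarrow> 'n set \<Rightarrow> (real ^ 'n) set" where
  "face_for \<F> G = {x \<in> minkowski_simplex \<F>. (\<Sum>i\<in>G. x $ i) = real (count_below \<F> G)}"

end

theory Submission
  imports Defs
begin


abbreviation ax :: "'n::finite \<Rightarrow> real^'n" where "ax i \<equiv> axis i 1"

lemma ax_comp: "ax i $ k = (if k = i then 1 else 0)"
  by (simp add: axis_def)

lemma sum_ax_comp: "(\<Sum>i\<in>A. c i *\<^sub>R ax i) $ k = (if k \<in> A then c k else (0::real))"
proof -
  have "(\<Sum>i\<in>A. c i *\<^sub>R ax i) $ k = (\<Sum>i\<in>A. if k = i then c i else 0)"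
    by (simp add: ax_comp if_distrib cong: if_cong)
  also have "\<dots> = (if k \<in> A then c k else 0)"
    by (simp add: sum.delta)
  finally show ?thesis .
qed

lemma inner_vec_real: "(a::real^'n) \<bullet> x = (\<Sum>i\<in>UNIV. a$i * x$i)"
  by (simp add: inner_vec_def)

lemma simplex_char:
  fixes F :: "'n::finite set"
  shows "x \<in> simplexF F \<longleftrightarrow> (\<forall>i. 0 \<le> x$i) \<and> (\<forall>i. i \<notin> F \<longrightarrow> x$i = 0) \<and> (\<Sum>i\<in>UNIV. x$i) = 1"
proof -
  have inj: "inj_on ax F" by (auto simp: inj_on_def axis_eq_axis)
  have fin: "finite (ax ` F)" by simp
  have hull: "simplexF F = convex hull (ax ` F)"
    unfolding simplexF_def by (rule arg_cong[where f="\<lambda>S. convex hull S"]) auto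
  show ?thesis
  proof
    assume "x \<in> simplexF F"
    then obtain u where u: "\<forall>z\<in>ax ` F. 0 \<le> u z" "sum u (ax ` F) = 1"
        "(\<Sum>z\<in>ax ` F. u z *\<^sub>R z) = x"
      unfolding hull convex_hull_finite[OF fin] by blast
    have x: "x = (\<Sum>i\<in>F. u (ax i) *\<^sub>R ax i)"
      using u(3) sum.reindex[OF inj, of "\<lambda>z. u z *\<^sub>R z"] by simp
    have xc: "x $ k = (if k \<in> F then u (ax k) else 0)" for k
      unfolding x sum_ax_comp ..
    have "(\<Sum>i\<in>UNIV. x$i) = (\<Sum>i\<in>F. u (ax i))"
      unfolding xc by (simp add: sum.If_cases)
    also have "\<dots> = 1" using u(2) sum.reindex[OF inj, of u] by simp
    finally show "(\<forall>i. 0 \<le> x$i) \<and> (\<forall>i. i \<notin> F \<longrightarrow> x$i = 0) \<and> (\<Sum>i\<in>UNIV. x$i) = 1"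
      using u(1) by (auto simp: xc)
  next
    assume h: "(\<forall>i. 0 \<le> x$i) \<and> (\<forall>i. i \<notin> F \<longrightarrow> x$i = 0) \<and> (\<Sum>i\<in>UNIV. x$i) = 1"
    define u where "u z = z \<bullet> x" for z
    have uax: "u (ax i) = x $ i" for i
      by (simp add: u_def inner_axis')
    have "(\<Sum>z\<in>ax ` F. u z *\<^sub>R z) = (\<Sum>i\<in>F. x$i *\<^sub>R ax i)"
      using sum.reindex[OF inj, of "\<lambda>z. u z *\<^sub>R z"] by (simp add: uax)
    also have "\<dots> = x"
      using h unfolding vec_eq_iff sum_ax_comp by auto
    finally have 1: "(\<Sum>z\<in>ax ` F. u z *\<^sub>R z) = x" .
    have "sum u (ax ` F) = (\<Sum>i\<in>F. x$i)"
      using sum.reindex[OF inj, of u] by (simp add: uax)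
    also have "\<dots> = (\<Sum>i\<in>UNIV. x$i)"
      using h by (intro sum.mono_neutral_left) auto
    finally have 2: "sum u (ax ` F) = 1" using h by simp
    have 3: "\<forall>z\<in>ax ` F. 0 \<le> u z" using h by (auto simp: uax)
    show "x \<in> simplexF F"
      unfolding hull convex_hull_finite[OF fin] using 1 2 3 by blast
  qed
qed

lemma ax_in_simplex: "ax i \<in> simplexF F \<longleftrightarrow> i \<in> F"
  by (auto simp: simplex_char ax_comp)

lemma simplex_nonneg: "x \<in> simplexF F \<Longrightarrow> 0 \<le> x $ i"
  by (simp add: simplex_char)

lemma simplex_sum_sub: "x \<in> simplexF F \<Longrightarrow> F \<subseteq> H \<Longrightarrow> (\<Sum>i\<in>H. x$i) = 1"
proof -
  assume a: "x \<in> simplexF F" "F \<subseteq> H"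
  have "(\<Sum>i\<in>H. x$i) = (\<Sum>i\<in>UNIV. x$i)"
    using a by (intro sum.mono_neutral_left) (auto simp: simplex_char)
  then show ?thesis using a by (simp add: simplex_char)
qed

lemma sum_split_face:
  fixes \<F> :: "'n::finite set set"
  assumes p: "\<forall>F\<in>\<F>. p F \<in> simplexF F"
  shows "(\<Sum>i\<in>H. (\<Sum>F\<in>\<F>. p F) $ i) =
     real (count_below \<F> H) + (\<Sum>F\<in>{F\<in>\<F>. \<not> F \<subseteq> H}. \<Sum>i\<in>H. p F $ i)"
proof -
  have "(\<Sum>i\<in>H. (\<Sum>F\<in>\<F>. p F) $ i) = (\<Sum>F\<in>\<F>. \<Sum>i\<in>H. p F $ i)"
    by (simp add: sum.swap[of _ H])
  also have "\<dots> = (\<Sum>F\<in>{F\<in>\<F>. F \<subseteq> H} \<union> {F\<in>\<F>. \<not> F \<subseteq> H}. \<Sum>i\<in>H. p F $ i)"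
    by (rule sum.cong) auto
  also have "\<dots>
     = (\<Sum>F\<in>{F\<in>\<F>. F \<subseteq> H}. \<Sum>i\<in>H. p F $ i) + (\<Sum>F\<in>{F\<in>\<F>. \<not> F \<subseteq> H}. \<Sum>i\<in>H. p F $ i)"
    by (intro sum.union_disjoint) auto
  also have "(\<Sum>F\<in>{F\<in>\<F>. F \<subseteq> H}. \<Sum>i\<in>H. p F $ i) = (\<Sum>F\<in>{F\<in>\<F>. F \<subseteq> H}. 1)"
    using p by (intro sum.cong) (auto intro: simplex_sum_sub)
  also have "\<dots> = real (count_below \<F> H)" by (simp add: count_below_def)
  finally show ?thesis .
qed

lemma mink_mem: "x \<in> minkowski_simplex \<F> \<longleftrightarrow> (\<exists>p. (\<forall>F\<in>\<F>. p F \<in> simplexF F) \<and> x = (\<Sum>F\<in>\<F>. p F))"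
  by (simp add: minkowski_simplex_def)

lemma valid_ineq:
  fixes \<F> :: "'n::finite set set"
  assumes "x \<in> minkowski_simplex \<F>"
  shows "real (count_below \<F> H) \<le> (\<Sum>i\<in>H. x $ i)"
proof -
  obtain p where p: "\<forall>F\<in>\<F>. p F \<in> simplexF F" and x: "x = (\<Sum>F\<in>\<F>. p F)"
    using assms mink_mem by blast
  have "0 \<le> (\<Sum>F\<in>{F\<in>\<F>. \<not> F \<subseteq> H}. \<Sum>i\<in>H. p F $ i)"
    using p by (intro sum_nonneg) (auto intro: simplex_nonneg)
  then show ?thesis unfolding x sum_split_face[OF p] by simp
qed

lemma total_sum:
  fixes \<F> :: "'n::finite set set"
  assumes "x \<in> minkowski_simplex \<F>"
  shows "(\<Sum>i\<in>UNIV. x $ i) = real (card \<F>)"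
proof -
  obtain p where p: "\<forall>F\<in>\<F>. p F \<in> simplexF F" and x: "x = (\<Sum>F\<in>\<F>. p F)"
    using assms mink_mem by blast
  have "count_below \<F> UNIV = card \<F>" by (simp add: count_below_def)
  then show ?thesis unfolding x sum_split_face[OF p] by simp
qed

lemma mink_polytope:
  fixes \<F> :: "'n::finite set set"
  shows "polytope (minkowski_simplex \<F>)"
proof -
  have fin: "finite \<F>" by simp
  have "minkowski_simplex \<F> = (\<Sum>F\<in>\<F>. simplexF F)"
    unfolding set_sum_alt[OF fin] minkowski_simplex_def by auto
  also have "\<dots> = (\<Sum>F\<in>\<F>. convex hull {axis i 1 | i. i \<in> F})"
    by (simp add: simplexF_def)
  also have "\<dots> = convex hull (\<Sum>F\<in>\<F>. {axis i 1 | i. i \<in> F})"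
    by (simp add: convex_hull_set_sum)
  finally have eq: "minkowski_simplex \<F> = convex hull (\<Sum>F\<in>\<F>. {axis i (1::real) | i. i \<in> F})" .
  have "finite (\<Sum>F\<in>\<F>. {axis i (1::real) | i. i \<in> F})"
    using fin by (induction rule: finite_induct) (auto intro: finite_set_plus)
  then show ?thesis unfolding eq polytope_def by blast
qed

lemma mink_convex: "convex (minkowski_simplex \<F>)"
  by (simp add: mink_polytope polytope_imp_convex)

lemma dirlb:
  fixes P W :: "(real^'n::finite) set"
  assumes "a \<in> P" "W \<subseteq> span {x - y | x y. x \<in> P \<and> y \<in> P}"
  shows "int (dim W) \<le> aff_dim P"
proof -
  have af: "aff_dim P = int (dim ((\<lambda>x. x - a) ` P))"
    using assms(1) by (intro aff_dim_eq_dim_subtract) (simp add: hull_inc)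
  have "{x - y | x y. x \<in> P \<and> y \<in> P} \<subseteq> span ((\<lambda>x. x - a) ` P)"
  proof clarify
    fix x y assume "x \<in> P" "y \<in> P"
    then have "x - a \<in> span ((\<lambda>x. x - a) ` P)" "y - a \<in> span ((\<lambda>x. x - a) ` P)"
      by (auto intro: span_base)
    then have "(x - a) - (y - a) \<in> span ((\<lambda>x. x - a) ` P)" by (rule span_diff)
    then show "x - y \<in> span ((\<lambda>x. x - a) ` P)" by simp
  qed
  then have "span {x - y | x y. x \<in> P \<and> y \<in> P} \<subseteq> span ((\<lambda>x. x - a) ` P)"
    by (simp add: span_minimal)
  with assms(2) have "dim W \<le> dim (span ((\<lambda>x. x - a) ` P))"
    by (intro dim_subset) blast
  then show ?thesis unfolding af dim_span by simp
qed

lemma vec_expand: "(\<Sum>i\<in>UNIV. v$i *\<^sub>R ax i) = (v::real^'n::finite)"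
  unfolding vec_eq_iff sum_ax_comp by simp

lemma W_span:
  fixes v :: "real^'n::finite"
  assumes cls: "\<And>i j. (i\<in>G \<longleftrightarrow> j\<in>G) \<Longrightarrow> ax i - ax j \<in> span D"
    and s1: "(\<Sum>i\<in>UNIV. v$i) = 0" and s2: "(\<Sum>i\<in>G. v$i) = 0"
  shows "v \<in> span D"
proof -
  define g where "g = (SOME g. g \<in> G)"
  define h where "h = (SOME h. h \<notin> G)"
  have s3: "(\<Sum>i\<in>-G. v$i) = 0"
  proof -
    have "(\<Sum>i\<in>UNIV. v$i) = (\<Sum>i\<in>G. v$i) + (\<Sum>i\<in>-G. v$i)"
      by (subst sum.union_disjoint[symmetric]) (auto intro: sum.cong)
    then show ?thesis using s1 s2 by simp
  qed
  have A: "(\<Sum>i\<in>G. v$i *\<^sub>R (ax i - ax g)) = (\<Sum>i\<in>G. v$i *\<^sub>R ax i)"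
    by (simp add: scaleR_diff_right sum_subtractf flip: scaleR_sum_left add: s2)
  have B: "(\<Sum>i\<in>-G. v$i *\<^sub>R (ax i - ax h)) = (\<Sum>i\<in>-G. v$i *\<^sub>R ax i)"
    by (simp add: scaleR_diff_right sum_subtractf flip: scaleR_sum_left add: s3)
  have "v = (\<Sum>i\<in>G. v$i *\<^sub>R ax i) + (\<Sum>i\<in>-G. v$i *\<^sub>R ax i)"
    unfolding vec_eq_iff vector_add_component sum_ax_comp by simp
  also have "\<dots> = (\<Sum>i\<in>G. v$i *\<^sub>R (ax i - ax g)) + (\<Sum>i\<in>-G. v$i *\<^sub>R (ax i - ax h))"
    using A B by simp
  also have "\<dots> \<in> span D"
  proof (intro span_add span_sum span_mul)
    fix i assume "i \<in> G"
    then have "g \<in> G" unfolding g_def by (meson someI)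
    with \<open>i \<in> G\<close> show "ax i - ax g \<in> span D" by (intro cls) simp
  next
    fix i assume "i \<in> -G"
    then have "h \<notin> G" unfolding h_def by (metis ComplD someI)
    with \<open>i \<in> -G\<close> show "ax i - ax h \<in> span D" by (intro cls) simp
  qed
  finally show ?thesis .
qed

lemma dimW:
  fixes G :: "'n::finite set"
  shows "int CARD('n) - (if G = {} then 1 else 2)
     \<le> int (dim {v::real^'n. (\<Sum>i\<in>UNIV. v$i) = 0 \<and> (\<Sum>i\<in>G. v$i) = 0})"
proof -
  define a :: "real^'n" where "a = (\<chi> i. 1)"
  define b :: "real^'n" where "b = (\<chi> i. if i \<in> G then 1 else 0)"
  have ia: "a \<bullet> v = (\<Sum>i\<in>UNIV. v$i)" for v by (simp add: a_def inner_vec_real)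
  have ib: "b \<bullet> v = (\<Sum>i\<in>G. v$i)" for v
  proof -
    have "b \<bullet> v = (\<Sum>i\<in>UNIV. if i \<in> G then v$i else 0)"
      unfolding b_def inner_vec_real by (rule sum.cong) auto
    also have "\<dots> = (\<Sum>i\<in>G. v$i)" by (simp add: sum.If_cases)
    finally show ?thesis .
  qed
  have eq: "{v::real^'n. (\<Sum>i\<in>UNIV. v$i) = 0 \<and> (\<Sum>i\<in>G. v$i) = 0}
      = {v. a \<bullet> v = 0} \<inter> {v. b \<bullet> v = 0}" by (auto simp: ia ib)
  have a0: "a \<noteq> 0" by (simp add: a_def vec_eq_iff)
  have da: "dim {v. a \<bullet> v = 0} = CARD('n) - 1"
    using dim_hyperplane[OF a0] by simp
  have db: "int (dim {v. b \<bullet> v = 0}) \<ge> int CARD('n) - (if G = {} then 0 else 1)"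
  proof (cases "G = {}")
    case True
    then have "{v. b \<bullet> v = 0} = UNIV" by (auto simp: ib)
    then show ?thesis using True by (simp add: dim_UNIV)
  next
    case False
    then have "b \<noteq> 0" by (auto simp: b_def vec_eq_iff)
    then show ?thesis using dim_hyperplane[of b] False by simp
  qed
  have "dim {x + y |x y. x \<in> {v. a \<bullet> v = 0} \<and> y \<in> {v. b \<bullet> v = 0}}
     + dim ({v. a \<bullet> v = 0} \<inter> {v. b \<bullet> v = 0}) = dim {v. a \<bullet> v = 0} + dim {v::real^'n. b \<bullet> v = 0}"
    by (intro dim_sums_Int subspace_hyperplane)
  moreover have "dim {x + y |x y. x \<in> {v. a \<bullet> v = 0} \<and> y \<in> {v. b \<bullet> v = 0}} \<le> CARD('n)"
    by (rule dim_subset_UNIV_cart)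
  moreover have "CARD('n) \<ge> 1" by (simp add: Suc_le_eq)
  ultimately show ?thesis unfolding eq using da db by (auto split: if_splits)
qed

lemma bc_nonempty:
  assumes "\<forall>F\<in>\<F>. F \<noteq> {}" "G \<in> building_closure \<F>"
  shows "G \<noteq> {}"
  using assms(2) by induction (use assms(1) in auto)

lemma bc_union_common:
  assumes "finite \<H>" "\<H> \<noteq> {}" "\<forall>H\<in>\<H>. H \<in> building_closure \<F> \<and> c \<in> H"
  shows "\<Union>\<H> \<in> building_closure \<F>"
  using assms
proof (induction rule: finite_ne_induct)
  case (singleton x) then show ?case by simp
next
  case (insert x F)
  then have "x \<union> \<Union>F \<in> building_closure \<F>"
    by (intro building_closure.union) auto
  then show ?case by simp
qed

lemma bc_connected:
  assumes "G0 \<in> building_closure \<F>"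
  shows "G \<subseteq> G0 \<Longrightarrow> G \<noteq> {} \<Longrightarrow> G \<noteq> G0 \<Longrightarrow> \<exists>F\<in>\<F>. F \<subseteq> G0 \<and> F \<inter> G \<noteq> {} \<and> \<not> F \<subseteq> G"
  using assms
proof (induction arbitrary: G)
  case (base F)
  then show ?case by blast
next
  case (single i)
  then show ?case by blast
next
  case (union A B)
  show ?case
  proof (cases "G \<inter> A \<noteq> {} \<and> \<not> A \<subseteq> G")
    case True
    then obtain F where "F\<in>\<F>" "F \<subseteq> A" "F \<inter> (G \<inter> A) \<noteq> {}" "\<not> F \<subseteq> G \<inter> A"
      using union.IH(1)[of "G \<inter> A"] by blast
    then show ?thesis by blast
  next
    case False
    have "G \<inter> B \<noteq> {} \<and> \<not> B \<subseteq> G"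
      using False union.prems union.hyps(3) by blast
    then obtain F where "F\<in>\<F>" "F \<subseteq> B" "F \<inter> (G \<inter> B) \<noteq> {}" "\<not> F \<subseteq> G \<inter> B"
      using union.IH(2)[of "G \<inter> B"] by blast
    then show ?thesis by blast
  qed
qed

lemma bc_span:
  assumes "G0 \<in> building_closure \<F>"
  shows "G0 \<subseteq> G \<Longrightarrow> i \<in> G0 \<Longrightarrow> j \<in> G0 \<Longrightarrow>
    ax i - ax j \<in> span {ax k - ax l | k l. \<exists>F\<in>\<F>. F \<subseteq> G \<and> k \<in> F \<and> l \<in> F}"
  using assms
proof (induction arbitrary: i j)
  case (base F)
  then show ?case by (intro span_base) blast
next
  case (single i)
  then show ?case by (simp add: span_zero)
next
  case (union A B)
  obtain c where c: "c \<in> A" "c \<in> B" using union.hyps(3) by blast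
  have ci: "ax i - ax c \<in> span {ax k - ax l | k l. \<exists>F\<in>\<F>. F \<subseteq> G \<and> k \<in> F \<and> l \<in> F}"
    using union c by blast
  have cj: "ax c - ax j \<in> span {ax k - ax l | k l. \<exists>F\<in>\<F>. F \<subseteq> G \<and> k \<in> F \<and> l \<in> F}"
    using union c by blast
  have "(ax i - ax c) + (ax c - ax j) \<in> span {ax k - ax l | k l. \<exists>F\<in>\<F>. F \<subseteq> G \<and> k \<in> F \<and> l \<in> F}"
    using ci cj by (rule span_add)
  then show ?case by simp
qed



definition qpt :: "'n set \<Rightarrow> 'n set \<Rightarrow> real^'n::finite" where
  "qpt G F = ax (if F \<subseteq> G then (SOME i. i \<in> F) else (SOME i. i \<in> F - G))"


lemma qpt_simplex: "F \<noteq> {} \<Longrightarrow> qpt G F \<in> simplexF F"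
proof -
  assume F: "F \<noteq> {}"
  show ?thesis
  proof (cases "F \<subseteq> G")
    case True
    have "(SOME i. i \<in> F) \<in> F" using F by (simp add: some_in_eq)
    then show ?thesis using True by (simp add: qpt_def ax_in_simplex)
  next
    case False
    have "(SOME i. i \<in> F - G) \<in> F - G" using False by (metis (mono_tags, lifting) Diff_iff someI_ex subsetI)
    then show ?thesis using False by (simp add: qpt_def ax_in_simplex)
  qed
qed


lemma qpt_zero: "\<not> F \<subseteq> G \<Longrightarrow> i \<in> G \<Longrightarrow> qpt G F $ i = 0"
proof -
  assume a: "\<not> F \<subseteq> G" "i \<in> G"
  have "(SOME i. i \<in> F - G) \<in> F - G" using a(1) by (metis (mono_tags, lifting) Diff_iff someI_ex subsetI)
  then show ?thesis using a by (auto simp: qpt_def ax_comp)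
qed

lemma face_pt:
  fixes \<F> :: "'n::finite set set"
  assumes p: "\<forall>F\<in>\<F>. p F \<in> simplexF F"
    and z: "\<forall>F\<in>\<F>. \<not> F \<subseteq> G \<longrightarrow> (\<forall>i\<in>G. p F $ i = 0)"
  shows "(\<Sum>F\<in>\<F>. p F) \<in> face_for \<F> G"
proof -
  have "(\<Sum>F\<in>{F\<in>\<F>. \<not> F \<subseteq> G}. \<Sum>i\<in>G. p F $ i) = 0"
    using z by (intro sum.neutral) auto
  then have "(\<Sum>i\<in>G. (\<Sum>F\<in>\<F>. p F) $ i) = real (count_below \<F> G)"
    unfolding sum_split_face[OF p] by simp
  moreover have "(\<Sum>F\<in>\<F>. p F) \<in> minkowski_simplex \<F>"
    unfolding mink_mem using p by blast
  ultimately show ?thesis unfolding face_for_def by blast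
qed

lemma upd_diff:
  fixes \<F> :: "'n::finite set set"
  assumes "U \<in> \<F>"
  shows "(\<Sum>F\<in>\<F>. (p(U := u)) F) - (\<Sum>F\<in>\<F>. (p(U := w)) F) = u - (w::real^'n)"
proof -
  have "(\<Sum>F\<in>\<F>. (p(U := u)) F) = u + (\<Sum>F\<in>\<F> - {U}. p F)" for u
    using assms by (simp add: sum.remove)
  then show ?thesis by simp
qed


lemma face_dim_lb:
  fixes \<F> :: "'n::finite set set"
  assumes nonempty: "\<forall>F\<in>\<F>. F \<noteq> {}" and full: "UNIV \<in> \<F>"
    and G: "G = {} \<or> G \<in> building_closure \<F>" "G \<noteq> UNIV"
  shows "int CARD('n) - (if G = {} then 1 else 2) \<le> aff_dim (face_for \<F> G)"
proof -
  let ?P = "face_for \<F> G"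
  let ?D = "{x - y | x y. x \<in> ?P \<and> y \<in> ?P}"
  have mem: "(\<Sum>F\<in>\<F>. ((qpt G)(U := ax u)) F) \<in> ?P"
    if "U \<in> \<F>" "u \<in> U" "\<not> U \<subseteq> G \<longrightarrow> u \<notin> G" for U u
    using that nonempty
    by (intro face_pt) (auto simp: qpt_simplex qpt_zero ax_in_simplex ax_comp)
  have dif: "ax u - ax w \<in> span ?D"
    if "U \<in> \<F>" "u \<in> U" "w \<in> U" "\<not> U \<subseteq> G \<longrightarrow> u \<notin> G \<and> w \<notin> G" for U u w
  proof -
    have "(\<Sum>F\<in>\<F>. ((qpt G)(U := ax u)) F) - (\<Sum>F\<in>\<F>. ((qpt G)(U := ax w)) F) \<in> ?D"
      using mem[of U u] mem[of U w] that by blast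
    then show ?thesis unfolding upd_diff[OF that(1)] by (rule span_base)
  qed
  have cls: "ax i - ax j \<in> span ?D" if "i \<in> G \<longleftrightarrow> j \<in> G" for i j
  proof (cases "i \<in> G")
    case False
    then show ?thesis using that dif[OF full, of i j] G(2) by auto
  next
    case True
    then have Gb: "G \<in> building_closure \<F>" using G(1) by auto
    have "ax i - ax j \<in> span {ax k - ax l | k l. \<exists>F\<in>\<F>. F \<subseteq> G \<and> k \<in> F \<and> l \<in> F}"
      using bc_span[OF Gb, of G i j] True that by auto
    moreover have "{ax k - ax l | k l. \<exists>F\<in>\<F>. F \<subseteq> G \<and> k \<in> F \<and> l \<in> F} \<subseteq> span ?D"
      using dif by blast
    ultimately show ?thesis by (meson span_minimal subspace_span subsetD)
  qed
  have W: "{v::real^'n. (\<Sum>i\<in>UNIV. v$i) = 0 \<and> (\<Sum>i\<in>G. v$i) = 0} \<subseteq> span ?D"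
    using W_span[OF cls] by blast
  have a: "(\<Sum>F\<in>\<F>. qpt G F) \<in> ?P"
    using nonempty by (intro face_pt) (auto simp: qpt_simplex qpt_zero)
  show ?thesis using dirlb[OF a W] dimW[of G] by linarith
qed


lemma sum_ax_H: "(\<Sum>i\<in>H. ax j $ i) = (if j \<in> H then 1 else (0::real))"
  by (simp add: ax_comp sum.delta)

lemma inner_ind: "(\<chi> i. if i \<in> G then 1 else 0) \<bullet> (v::real^'n::finite) = (\<Sum>i\<in>G. v$i)"
proof -
  have "(\<chi> i. if i \<in> G then 1 else 0) \<bullet> v = (\<Sum>i\<in>UNIV. if i \<in> G then v$i else 0)"
    unfolding inner_vec_real by (rule sum.cong) auto
  also have "\<dots> = (\<Sum>i\<in>G. v$i)" by (simp add: sum.If_cases)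
  finally show ?thesis .
qed

lemma gap:
  fixes \<F> :: "'n::finite set set"
  assumes p: "\<forall>F\<in>\<F>. p F \<in> simplexF F" and F0: "F0 \<in> \<F>" "\<not> F0 \<subseteq> H"
  shows "real (count_below \<F> H) + (\<Sum>i\<in>H. p F0 $ i) \<le> (\<Sum>i\<in>H. (\<Sum>F\<in>\<F>. p F) $ i)"
proof -
  have "(\<Sum>i\<in>H. p F0 $ i) \<le> (\<Sum>F\<in>{F\<in>\<F>. \<not> F \<subseteq> H}. \<Sum>i\<in>H. p F $ i)"
    using p F0 by (intro member_le_sum sum_nonneg) (auto intro: simplex_nonneg)
  then show ?thesis unfolding sum_split_face[OF p] by simp
qed

lemma face_S:
  fixes \<F> :: "'n::finite set set"
  assumes nonempty: "\<forall>F\<in>\<F>. F \<noteq> {}"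
  shows "face_for \<F> {} = minkowski_simplex \<F>"
proof -
  have "count_below \<F> {} = 0" using nonempty by (auto simp: count_below_def)
  then show ?thesis by (auto simp: face_for_def)
qed

lemma dim_S:
  fixes \<F> :: "'n::finite set set"
  assumes nonempty: "\<forall>F\<in>\<F>. F \<noteq> {}" and full: "UNIV \<in> \<F>"
  shows "aff_dim (minkowski_simplex \<F>) = int CARD('n) - 1"
proof (rule antisym)
  define a :: "real^'n" where "a = (\<chi> i. 1)"
  have ia: "a \<bullet> v = (\<Sum>i\<in>UNIV. v$i)" for v by (simp add: a_def inner_vec_real)
  have a0: "a \<noteq> 0" by (simp add: a_def vec_eq_iff)
  have "minkowski_simplex \<F> \<subseteq> {x. a \<bullet> x = real (card \<F>)}"
    using total_sum by (auto simp: ia)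
  then have "aff_dim (minkowski_simplex \<F>) \<le> aff_dim {x. a \<bullet> x = real (card \<F>)}"
    by (rule aff_dim_subset)
  then show "aff_dim (minkowski_simplex \<F>) \<le> int CARD('n) - 1"
    using aff_dim_hyperplane[OF a0] by simp
next
  have "(UNIV::'n set) \<noteq> {}" by simp
  then show "int CARD('n) - 1 \<le> aff_dim (minkowski_simplex \<F>)"
    using face_dim_lb[OF nonempty full, of "{}"] face_S[OF nonempty] by simp
qed

lemma face_is_face:
  fixes \<F> :: "'n::finite set set"
  shows "face_for \<F> G face_of minkowski_simplex \<F>"
proof -
  have "face_for \<F> G = minkowski_simplex \<F> \<inter> {x. (\<chi> i. if i \<in> G then 1 else 0) \<bullet> x = real (count_below \<F> G)}"
    by (auto simp: face_for_def inner_ind)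
  also have "\<dots> face_of minkowski_simplex \<F>"
    by (intro face_of_Int_supporting_hyperplane_ge mink_convex) (simp add: inner_ind valid_ineq)
  finally show ?thesis .
qed

lemma face_facet:
  fixes \<F> :: "'n::finite set set"
  assumes nonempty: "\<forall>F\<in>\<F>. F \<noteq> {}" and full: "UNIV \<in> \<F>"
    and G: "G \<in> building_closure \<F>" "G \<noteq> UNIV"
  shows "face_for \<F> G facet_of minkowski_simplex \<F>"
proof -
  have Gne: "G \<noteq> {}" using bc_nonempty[OF nonempty G(1)] .
  then obtain g where g: "g \<in> G" by blast
  have a: "(\<Sum>F\<in>\<F>. qpt G F) \<in> face_for \<F> G"
    using nonempty by (intro face_pt) (auto simp: qpt_simplex qpt_zero)
  have lb: "int CARD('n) - 2 \<le> aff_dim (face_for \<F> G)"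
    using face_dim_lb[OF nonempty full, of G] G Gne by simp
  let ?p = "(qpt G)(UNIV := ax g)"
  have p: "\<forall>F\<in>\<F>. ?p F \<in> simplexF F" using nonempty by (auto simp: qpt_simplex ax_in_simplex)
  have "real (count_below \<F> G) + (\<Sum>i\<in>G. ?p UNIV $ i) \<le> (\<Sum>i\<in>G. (\<Sum>F\<in>\<F>. ?p F) $ i)"
    using gap[OF p full] G(2) by blast
  then have "(\<Sum>F\<in>\<F>. ?p F) \<notin> face_for \<F> G"
    using g by (simp add: face_for_def sum_ax_H)
  moreover have "(\<Sum>F\<in>\<F>. ?p F) \<in> minkowski_simplex \<F>" unfolding mink_mem using p by blast
  ultimately have ne: "face_for \<F> G \<noteq> minkowski_simplex \<F>" by blast
  have "aff_dim (face_for \<F> G) < aff_dim (minkowski_simplex \<F>)"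
    by (rule face_of_aff_dim_lt[OF mink_convex face_is_face ne])
  then show ?thesis unfolding facet_of_def using face_is_face a lb dim_S[OF nonempty full] by auto
qed


lemma yexists:
  fixes \<F> :: "'n::finite set set"
  assumes nonempty: "\<forall>F\<in>\<F>. F \<noteq> {}" and full: "UNIV \<in> \<F>"
    and G0: "G0 \<in> building_closure \<F>" "G0 \<noteq> UNIV"
  shows "\<exists>y\<in>face_for \<F> G0. \<forall>G\<in>building_closure \<F> - {UNIV, G0}.
           real (count_below \<F> G) + 1 / real CARD('n) \<le> (\<Sum>i\<in>G. y $ i)"
proof -
  define A where "A F = (if F \<subseteq> G0 then F else F - G0)" for F
  define u where "u F = (\<Sum>i\<in>A F. (1 / real (card (A F))) *\<^sub>R ax i)" for F
  have uc: "u F $ k = (if k \<in> A F then 1 / real (card (A F)) else 0)" for F k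
    unfolding u_def sum_ax_comp ..
  have Ane: "A F \<noteq> {}" if "F \<in> \<F>" for F
    using that nonempty by (auto simp: A_def)
  have AF: "A F \<subseteq> F" for F by (auto simp: A_def)
  have u: "\<forall>F\<in>\<F>. u F \<in> simplexF F"
  proof
    fix F assume F: "F \<in> \<F>"
    have c: "card (A F) > 0" using Ane[OF F] by (simp add: card_gt_0_iff)
    have "(\<Sum>i\<in>UNIV. u F $ i) = (\<Sum>i\<in>A F. 1 / real (card (A F)))"
      unfolding uc by (simp add: sum.If_cases)
    also have "\<dots> = 1" using Ane[OF F] by simp
    finally show "u F \<in> simplexF F"
      unfolding simplex_char using AF by (auto simp: uc)
  qed
  have y: "(\<Sum>F\<in>\<F>. u F) \<in> face_for \<F> G0"
    using u by (intro face_pt) (auto simp: uc A_def)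
  have card_le: "card (A F) \<le> CARD('n)" for F by (rule card_mono) auto
  have key: "1 / real CARD('n) \<le> (\<Sum>i\<in>G. u F $ i)"
    if F: "F \<in> \<F>" and k: "k \<in> A F \<inter> G" for F G k
  proof -
    have c: "card (A F) > 0" using Ane[OF F] by (simp add: card_gt_0_iff)
    have "1 / real CARD('n) \<le> 1 / real (card (A F))"
      using c card_le[of F] by (intro divide_left_mono) auto
    also have "\<dots> = u F $ k" using k by (simp add: uc)
    also have "\<dots> \<le> (\<Sum>i\<in>G. u F $ i)"
      using k by (intro member_le_sum) (auto simp: uc)
    finally show ?thesis .
  qed
  have "real (count_below \<F> G) + 1 / real CARD('n) \<le> (\<Sum>i\<in>G. (\<Sum>F\<in>\<F>. u F) $ i)"
    if G: "G \<in> building_closure \<F>" "G \<noteq> UNIV" "G \<noteq> G0" for G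
  proof -
    obtain F k where F: "F \<in> \<F>" "\<not> F \<subseteq> G" "k \<in> A F \<inter> G"
    proof (cases "G \<subseteq> G0")
      case True
      obtain F where "F \<in> \<F>" "F \<subseteq> G0" "F \<inter> G \<noteq> {}" "\<not> F \<subseteq> G"
        using bc_connected[OF G0(1) True bc_nonempty[OF nonempty G(1)] G(3)] by blast
      moreover from this obtain k where "k \<in> F \<inter> G" by blast
      ultimately show ?thesis using that[of F k] by (simp add: A_def)
    next
      case False
      then obtain k where "k \<in> G" "k \<notin> G0" by blast
      moreover have "A UNIV = - G0" using G0(2) by (auto simp: A_def)
      moreover have "\<not> UNIV \<subseteq> G" using G(2) by blast
      ultimately show ?thesis using that[OF full, of k] by simp
    qed
    show ?thesis using gap[OF u F(1,2)] key[OF F(1,3)] by linarith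
  qed
  then show ?thesis using y by blast
qed

lemma face_inj:
  fixes \<F> :: "'n::finite set set"
  assumes nonempty: "\<forall>F\<in>\<F>. F \<noteq> {}" and full: "UNIV \<in> \<F>"
  shows "inj_on (face_for \<F>) (building_closure \<F> - {UNIV})"
proof (rule inj_onI, rule ccontr)
  fix G G' assume G: "G \<in> building_closure \<F> - {UNIV}" and G': "G' \<in> building_closure \<F> - {UNIV}"
    and eq: "face_for \<F> G = face_for \<F> G'" and ne: "G \<noteq> G'"
  obtain y where y: "y \<in> face_for \<F> G" and
    h: "\<forall>H\<in>building_closure \<F> - {UNIV, G}. real (count_below \<F> H) + 1 / real CARD('n) \<le> (\<Sum>i\<in>H. y $ i)"
    using yexists[OF nonempty full, of G] G by auto
  have "real (count_below \<F> G') + 1 / real CARD('n) \<le> (\<Sum>i\<in>G'. y $ i)"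
    using h G' ne by auto
  moreover have "(\<Sum>i\<in>G'. y $ i) = real (count_below \<F> G')"
  proof -
    have "y \<in> face_for \<F> G'" using y eq by simp
    then show ?thesis by (simp add: face_for_def)
  qed
  moreover have "0 < 1 / real CARD('n)" by simp
  ultimately show False by linarith
qed

lemma irred:
  fixes \<F> :: "'n::finite set set"
  assumes nonempty: "\<forall>F\<in>\<F>. F \<noteq> {}" and full: "UNIV \<in> \<F>"
    and G0: "G0 \<in> building_closure \<F>" "G0 \<noteq> UNIV"
  shows "\<exists>x::real^'n. (\<Sum>i\<in>UNIV. x $ i) = real (card \<F>)
         \<and> (\<forall>G \<in> building_closure \<F> - {UNIV, G0}. (\<Sum>i\<in>G. x $ i) \<ge> real (count_below \<F> G))
         \<and> x \<notin> minkowski_simplex \<F>"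
proof -
  obtain y where y: "y \<in> face_for \<F> G0" and
    h: "\<forall>G\<in>building_closure \<F> - {UNIV, G0}. real (count_below \<F> G) + 1 / real CARD('n) \<le> (\<Sum>i\<in>G. y $ i)"
    using yexists[OF nonempty full G0] by blast
  obtain g where g: "g \<in> G0" using bc_nonempty[OF nonempty G0(1)] by blast
  obtain h where hh: "h \<notin> G0" using G0(2) by blast
  define e where "e = 1 / real CARD('n)"
  define x where "x = y + e *\<^sub>R (ax h - ax g)"
  have sx: "(\<Sum>i\<in>H. x $ i) = (\<Sum>i\<in>H. y $ i) + e * ((if h \<in> H then 1 else 0) - (if g \<in> H then 1 else 0))" for H
    by (simp add: x_def sum.distrib sum_subtractf flip: sum_distrib_left sum_ax_H)
  have "y \<in> minkowski_simplex \<F>" using y by (simp add: face_for_def)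
  then have ty: "(\<Sum>i\<in>UNIV. y $ i) = real (card \<F>)" by (rule total_sum)
  have e0: "0 < e" by (simp add: e_def)
  have 1: "(\<Sum>i\<in>UNIV. x $ i) = real (card \<F>)" using sx[of UNIV] ty by simp
  have 2: "\<forall>G \<in> building_closure \<F> - {UNIV, G0}. (\<Sum>i\<in>G. x $ i) \<ge> real (count_below \<F> G)"
  proof
    fix G assume "G \<in> building_closure \<F> - {UNIV, G0}"
    then have "real (count_below \<F> G) + e \<le> (\<Sum>i\<in>G. y $ i)" using h by (simp add: e_def)
    then show "(\<Sum>i\<in>G. x $ i) \<ge> real (count_below \<F> G)" using sx[of G] e0 by auto
  qed
  have "(\<Sum>i\<in>G0. x $ i) < real (count_below \<F> G0)"
    using sx[of G0] y g hh e0 by (simp add: face_for_def)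
  then have 3: "x \<notin> minkowski_simplex \<F>" using valid_ineq[of x \<F> G0] by linarith
  show ?thesis using 1 2 3 by blast
qed


lemma facet_char:
  fixes \<F> :: "'n::finite set set"
  assumes nonempty: "\<forall>F\<in>\<F>. F \<noteq> {}" and full: "UNIV \<in> \<F>"
    and P: "P facet_of minkowski_simplex \<F>"
  shows "\<exists>G \<in> building_closure \<F> - {UNIV}. P = face_for \<F> G"
proof -
  let ?S = "minkowski_simplex \<F>"
  have Pf: "P face_of ?S" "P \<noteq> {}" "aff_dim P = aff_dim ?S - 1"
    using P by (auto simp: facet_of_def)
  have "polyhedron ?S" by (rule polytope_imp_polyhedron[OF mink_polytope])
  then have "P exposed_face_of ?S" using Pf(1) exposed_face_of_polyhedron by blast
  then obtain a b where ab: "?S \<subseteq> {x. a \<bullet> x \<le> b}" "P = ?S \<inter> {x. a \<bullet> x = b}"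
    unfolding exposed_face_of_def by blast
  define M where "M = Max (range (\<lambda>i. a$i))"
  have aM: "a$i \<le> M" for i unfolding M_def by (rule Max_ge) auto
  have "M \<in> range (\<lambda>i. a$i)" unfolding M_def by (rule Max_in) auto
  then obtain iM where iM: "a$iM = M" by auto
  define L where "L = {i. a$i \<noteq> M}"
  have LU: "L \<noteq> UNIV" using iM by (auto simp: L_def)
  have ia: "a \<bullet> v = (\<Sum>k\<in>UNIV. a$k * v$k)" for v by (simp add: inner_vec_real)
  show ?thesis
  proof (cases "L = {}")
    case True
    then have aeq: "a$k = M" for k by (auto simp: L_def)
    have cx: "a \<bullet> x = M * real (card \<F>)" if "x \<in> ?S" for x
      using total_sum[OF that] by (simp add: ia aeq flip: sum_distrib_left)
    obtain x0 where "x0 \<in> P" using Pf(2) by blast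
    then have "b = M * real (card \<F>)" using ab(2) cx by auto
    then have "P = ?S" using ab(2) cx by auto
    then show ?thesis using Pf(3) by simp
  next
    case False
    then obtain i0 where i0: "i0 \<in> L" by blast
    have claim1: "(\<Sum>i\<in>L. x $ i) = real (count_below \<F> L)" if xP: "x \<in> P" for x
    proof -
      have xS: "x \<in> ?S" and xb: "a \<bullet> x = b" using xP ab(2) by auto
      obtain p where p: "\<forall>F\<in>\<F>. p F \<in> simplexF F" and x: "x = (\<Sum>F\<in>\<F>. p F)"
        using xS mink_mem by blast
      have z: "\<forall>F\<in>\<F>. \<not> F \<subseteq> L \<longrightarrow> (\<forall>i\<in>L. p F $ i = 0)"
      proof (intro ballI impI, rule ccontr)
        fix F i assume F: "F \<in> \<F>" "\<not> F \<subseteq> L" and i: "i \<in> L" "p F $ i \<noteq> 0"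
        obtain u where u: "u \<in> F" "a$u = M" using F(2) by (auto simp: L_def)
        have pos: "0 < p F $ i" using i(2) simplex_nonneg[of "p F" F i] p F(1) by auto
        have Mi: "0 < M - a$i" using aM[of i] i(1) by (auto simp: L_def)
        have "0 < (M - a$i) * p F $ i" using pos Mi by simp
        also have "\<dots> \<le> (\<Sum>k\<in>UNIV. (M - a$k) * p F $ k)"
          using p F(1) aM by (intro member_le_sum mult_nonneg_nonneg) (auto intro: simplex_nonneg)
        also have "\<dots> = M * (\<Sum>k\<in>UNIV. p F $ k) - a \<bullet> p F"
          by (simp add: ia left_diff_distrib sum_subtractf sum_distrib_left)
        also have "\<dots> = M - a \<bullet> p F" using p F(1) by (simp add: simplex_char)
        finally have lt: "a \<bullet> p F < M" by simp
        let ?q = "p(F := ax u)"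
        have q: "\<forall>F\<in>\<F>. ?q F \<in> simplexF F" using p u by (auto simp: ax_in_simplex)
        have "(\<Sum>G\<in>\<F>. ?q G) \<in> ?S" unfolding mink_mem using q by blast
        then have le: "a \<bullet> (\<Sum>G\<in>\<F>. ?q G) \<le> b" using ab(1) by auto
        have "(\<Sum>G\<in>\<F>. ?q G) - (\<Sum>G\<in>\<F>. (p(F := p F)) G) = ax u - p F"
          by (rule upd_diff[OF F(1)])
        then have "(\<Sum>G\<in>\<F>. ?q G) = x + (ax u - p F)" unfolding x by (simp add: algebra_simps)
        then have "a \<bullet> (\<Sum>G\<in>\<F>. ?q G) = b + (M - a \<bullet> p F)"
          using xb u(2) by (simp add: inner_diff_right inner_add_right inner_axis inner_axis')
        then show False using le lt by simp
      qed
      have "x \<in> face_for \<F> L" unfolding x by (rule face_pt[OF p z])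
      then show ?thesis by (simp add: face_for_def)
    qed
    define \<H> where "\<H> = {H \<in> building_closure \<F>. i0 \<in> H \<and> H \<subseteq> L}"
    define G where "G = \<Union>\<H>"
    have "{i0} \<in> \<H>" using i0 by (auto simp: \<H>_def intro: building_closure.single)
    then have Gb: "G \<in> building_closure \<F>" unfolding G_def
      by (intro bc_union_common[where c=i0]) (auto simp: \<H>_def)
    have GL: "G \<subseteq> L" and i0G: "i0 \<in> G" using \<open>{i0} \<in> \<H>\<close> by (auto simp: G_def \<H>_def)
    have maxi: "H \<subseteq> G" if "H \<in> building_closure \<F>" "i0 \<in> H" "H \<subseteq> L" for H
      using that by (auto simp: G_def \<H>_def)
    have split: "{F\<in>\<F>. F \<subseteq> L} = {F\<in>\<F>. F \<subseteq> G} \<union> {F\<in>\<F>. F \<subseteq> L - G}"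
    proof (intro equalityI subsetI)
      fix F assume "F \<in> {F\<in>\<F>. F \<subseteq> L}"
      then have F: "F \<in> \<F>" "F \<subseteq> L" by auto
      show "F \<in> {F\<in>\<F>. F \<subseteq> G} \<union> {F\<in>\<F>. F \<subseteq> L - G}"
      proof (cases "F \<inter> G = {}")
        case True then show ?thesis using F by auto
      next
        case False
        have "F \<union> G \<in> building_closure \<F>"
          using False building_closure.base[OF F(1)] Gb by (intro building_closure.union)
        then have "F \<union> G \<subseteq> G" using i0G F(2) GL by (intro maxi) auto
        then show ?thesis using F by auto
      qed
    qed (use GL in auto)
    have disj: "{F\<in>\<F>. F \<subseteq> G} \<inter> {F\<in>\<F>. F \<subseteq> L - G} = {}" using nonempty by blast
    have cbL: "count_below \<F> L = count_below \<F> G + count_below \<F> (L - G)"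
      unfolding count_below_def split by (rule card_Un_disjoint) (auto simp: disj)
    have PG: "P \<subseteq> face_for \<F> G"
    proof
      fix x assume xP: "x \<in> P"
      then have xS: "x \<in> ?S" using ab(2) by auto
      have "(\<Sum>i\<in>L. x $ i) = (\<Sum>i\<in>L - G. x $ i) + (\<Sum>i\<in>G. x $ i)"
        using GL by (simp add: sum.subset_diff)
      moreover note claim1[OF xP] cbL valid_ineq[OF xS, of G] valid_ineq[OF xS, of "L - G"]
      ultimately have "(\<Sum>i\<in>G. x $ i) = real (count_below \<F> G)" by simp
      then show "x \<in> face_for \<F> G" using xS by (simp add: face_for_def)
    qed
    have GU: "G \<noteq> UNIV" using GL LU by blast
    have fG: "face_for \<F> G facet_of ?S" by (rule face_facet[OF nonempty full Gb GU])
    have "P = face_for \<F> G"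
    proof (rule ccontr)
      assume ne: "P \<noteq> face_for \<F> G"
      have fGf: "face_for \<F> G face_of ?S" using face_is_face .
      have "P face_of face_for \<F> G"
        using Pf(1) PG face_of_imp_subset[OF fGf] by (rule face_of_subset)
      then have "aff_dim P < aff_dim (face_for \<F> G)"
        using face_of_aff_dim_lt[OF face_of_imp_convex[OF fGf] _ ne] by blast
      then show False using fG Pf(3) by (simp add: facet_of_def)
    qed
    then show ?thesis using Gb GU by blast
  qed
qed


theorem corollary3p13:
  fixes \<F> :: "'n::finite set set"
  assumes nonempty: "\<forall>F\<in>\<F>. F \<noteq> {}"
    and full: "UNIV \<in> \<F>"
  shows "aff_dim (minkowski_simplex \<F>) = int CARD('n) - 1
    \<and> (\<forall>G \<in> building_closure \<F> - {UNIV}. face_for \<F> G facet_of minkowski_simplex \<F>)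
    \<and> inj_on (face_for \<F>) (building_closure \<F> - {UNIV})
    \<and> (\<forall>P. P facet_of minkowski_simplex \<F> \<longrightarrow>
           (\<exists>G \<in> building_closure \<F> - {UNIV}. P = face_for \<F> G))
    \<and> (\<forall>G0 \<in> building_closure \<F> - {UNIV}. \<exists>x::real^'n.
           (\<Sum>i\<in>UNIV. x $ i) = real (card \<F>)
         \<and> (\<forall>G \<in> building_closure \<F> - {UNIV, G0}. (\<Sum>i\<in>G. x $ i) \<ge> real (count_below \<F> G))
         \<and> x \<notin> minkowski_simplex \<F>)"
proof -
  show ?thesis
    using dim_S[OF nonempty full] face_facet[OF nonempty full] face_inj[OF nonempty full]
      facet_char[OF nonempty full] irred[OF nonempty full] by blast
qed

end
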